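(* In the derived category $\mathcal D(\underline{\mathbb Z/2})$ one has: (a) $A_k^{op}\simeq\Sigma^{-k}A_k$ for $k\ge 0$; (b) $H(n)^{op}\simeq H(-(n+2))$ for all $n\in\mathbb Z$; (c) $B_r^{op}\simeq\Sigma^{r+4}B_r$ for $r\geq0$.
   Context: A $\underline{\mathbb Z/2}$-module is a pair of $\mathbb F_2$-vector spaces $M_\Theta,M_\bullet$ with maps $t\colon M_\Theta\to M_\Theta$, $p^*\colon M_\bullet\to M_\Theta$, $p_*\colon M_\Theta\to M_\bullet$ with $tp^*=p^*$, $p_*t=p_*$, $t^2=1$, $p^*p_*=1+t$, $p_*p^*=0$. $H$: both spaces $\mathbb F_2$, $t=p^*=\mathrm{id}$, $p_*=0$. $F$: $F_\Theta=\mathbb F_2^2$, $t$ the swap, $F_\bullet=\mathbb F_2$, $p_*(x,y)=x+y$, $p^*(z)=(z,z)$. $p\colon F\to H$, $p\colon H\to F$ the unique nonzero maps, $u=1+t$. Homological grading, $(\Sigma C)_i=C_{i-1}$. $A_k$: $F$ in degrees $k,\dots,0$, differentials $u$. $H(0)=H$ in degree $0$; for $n>0$, $H(-n)$: $H$ in degree $n$, $F$ in degrees $n-1,\dots,0$, differentials $p,u,\dots,u$; $H(n)$: $F$ in degrees $0,\dots,-(n-1)$, $H$ in degree $-n$, differentials $u,\dots,u,p$. $B_r$: $H$ in degree $0$, $F$ in degrees $-1,\dots,-(r+1)$, $H$ in degree $-(r+2)$, differentials $p,u,\dots,u,p$. For a module $M$, $M^{op}$ has $(M^{op})_\Theta=(M_\Theta)^\vee$,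 $(M^{op})_\bullet=(M_\bullet)^\vee$ (linear duals), $t_{M^{op}}=t_M^\vee$, $p^*_{M^{op}}=(p_*^M)^\vee$, $p_*^{M^{op}}=(p^*_M)^\vee$. For a complex $C$, $C^{op}$ is the complex with $(C^{op})_i=(C_{-i})^{op}$ and dual differentials; this preserves quasi-isomorphisms and so is defined on $\mathcal D(\underline{\mathbb Z/2})$. *)

theory Defs
  imports "Jordan_Normal_Form.Matrix" "HOL-Library.Z2"
begin

text \<open>A Z/2-module with finite-dimensional M_Theta = F_2^dT and M_bullet = F_2^dB.
  Linear maps F_2^m -> F_2^n are n x m matrices acting on column vectors.
  tm = t, up = p^* : M_bullet -> M_Theta, dn = p_* : M_Theta -> M_bullet.\<close>

record zmod =
  dT :: nat
  dB :: nat
  tm :: "bit mat"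
  up :: "bit mat"
  dn :: "bit mat"

definition is_zmod :: "zmod \<Rightarrow> bool" where
  "is_zmod M \<longleftrightarrow>
     tm M \<in> carrier_mat (dT M) (dT M) \<and>
     up M \<in> carrier_mat (dT M) (dB M) \<and>
     dn M \<in> carrier_mat (dB M) (dT M) \<and>
     tm M * up M = up M \<and>
     dn M * tm M = dn M \<and>
     tm M * tm M = 1\<^sub>m (dT M) \<and>
     up M * dn M = 1\<^sub>m (dT M) + tm M \<and>
     dn M * up M = 0\<^sub>m (dB M) (dB M)"

record zmor =
  mT :: "bit mat"
  mB :: "bit mat"

definition is_zmor :: "zmod \<Rightarrow> zmod \<Rightarrow> zmor \<Rightarrow> bool" where
  "is_zmor M N f \<longleftrightarrow>
     mT f \<in> carrier_mat (dT N) (dT M) \<and>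
     mB f \<in> carrier_mat (dB N) (dB M) \<and>
     mT f * tm M = tm N * mT f \<and>
     mT f * up M = up N * mB f \<and>
     mB f * dn M = dn N * mT f"

definition zcomp :: "zmor \<Rightarrow> zmor \<Rightarrow> zmor" where
  "zcomp g f = \<lparr>mT = mT g * mT f, mB = mB g * mB f\<rparr>"

definition zzero :: "zmod \<Rightarrow> zmod \<Rightarrow> zmor" where
  "zzero M N = \<lparr>mT = 0\<^sub>m (dT N) (dT M), mB = 0\<^sub>m (dB N) (dB M)\<rparr>"

record zcx =
  obj :: "int \<Rightarrow> zmod"
  dif :: "int \<Rightarrow> zmor"

definition is_complex :: "zcx \<Rightarrow> bool" where
  "is_complex C \<longleftrightarrow>
     (\<forall>i. is_zmod (obj C i)) \<and>
     (\<forall>i. is_zmor (obj C i) (obj C (i - 1)) (dif C i)) \<and>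
     (\<forall>i. zcomp (dif C (i - 1)) (dif C i) = zzero (obj C i) (obj C (i - 2)))"

definition is_chain_map :: "zcx \<Rightarrow> zcx \<Rightarrow> (int \<Rightarrow> zmor) \<Rightarrow> bool" where
  "is_chain_map C D f \<longleftrightarrow>
     (\<forall>i. is_zmor (obj C i) (obj D i) (f i)) \<and>
     (\<forall>i. zcomp (dif D i) (f i) = zcomp (f (i - 1)) (dif C i))"

text \<open>A map of complexes of F_2-vector spaces (dimensions dC, dD; differentials
  eC, eD; components g) induces an isomorphism on all homology groups
  H_i = ker d_i / im d_(i+1): surjectivity and injectivity written out.\<close>

definition vs_homology_iso ::
  "(int \<Rightarrow> nat) \<Rightarrow> (int \<Rightarrow> bit mat) \<Rightarrow> (int \<Rightarrow> nat) \<Rightarrow> (int \<Rightarrow> bit mat)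
     \<Rightarrow> (int \<Rightarrow> bit mat) \<Rightarrow> bool" where
  "vs_homology_iso dC eC dD eD g \<longleftrightarrow>
     (\<forall>i. \<forall>z \<in> carrier_vec (dD i). eD i *\<^sub>v z = 0\<^sub>v (dD (i - 1)) \<longrightarrow>
         (\<exists>x \<in> carrier_vec (dC i). eC i *\<^sub>v x = 0\<^sub>v (dC (i - 1)) \<and>
            (\<exists>y \<in> carrier_vec (dD (i + 1)). z = g i *\<^sub>v x + eD (i + 1) *\<^sub>v y))) \<and>
     (\<forall>i. \<forall>x \<in> carrier_vec (dC i).
         eC i *\<^sub>v x = 0\<^sub>v (dC (i - 1)) \<and>
         (\<exists>y \<in> carrier_vec (dD (i + 1)). g i *\<^sub>v x = eD (i + 1) *\<^sub>v y) \<longrightarrow>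
         (\<exists>w \<in> carrier_vec (dC (i + 1)). x = eC (i + 1) *\<^sub>v w))"

text \<open>Homology of complexes of Z/2-modules is computed levelwise (Theta and bullet),
  so a quasi-isomorphism is a chain map inducing isomorphisms at both levels.\<close>

definition is_quasi_iso :: "zcx \<Rightarrow> zcx \<Rightarrow> (int \<Rightarrow> zmor) \<Rightarrow> bool" where
  "is_quasi_iso C D f \<longleftrightarrow>
     is_chain_map C D f \<and>
     vs_homology_iso (\<lambda>i. dT (obj C i)) (\<lambda>i. mT (dif C i))
                     (\<lambda>i. dT (obj D i)) (\<lambda>i. mT (dif D i)) (\<lambda>i. mT (f i)) \<and>
     vs_homology_iso (\<lambda>i. dB (obj C i)) (\<lambda>i. mB (dif C i))
                     (\<lambda>i. dB (obj D i)) (\<lambda>i. mB (dif D i)) (\<lambda>i. mB (f i))"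

definition qiso_rel :: "zcx \<Rightarrow> zcx \<Rightarrow> bool" where
  "qiso_rel C D \<longleftrightarrow> is_complex C \<and> is_complex D \<and> (\<exists>f. is_quasi_iso C D f)"

text \<open>Isomorphism in the derived category: connected by a zigzag of quasi-isomorphisms.\<close>

definition D_iso :: "zcx \<Rightarrow> zcx \<Rightarrow> bool" (infix \<open>\<simeq>\<^sub>D\<close> 50) where
  "C \<simeq>\<^sub>D D \<longleftrightarrow> is_complex C \<and> is_complex D \<and>
      (\<lambda>X Y. qiso_rel X Y \<or> qiso_rel Y X)\<^sup>*\<^sup>* C D"

text \<open>(Sigma^n C)_i = C_(i-n); over F_2 no signs are needed.\<close>
definition susp :: "int \<Rightarrow> zcx \<Rightarrow> zcx" (\<open>\<Sigma>\<close>) where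
  "\<Sigma> n C = \<lparr>obj = (\<lambda>i. obj C (i - n)), dif = (\<lambda>i. dif C (i - n))\<rparr>"

text \<open>Linear duals: the dual of a map with matrix A has matrix A^T (dual bases).\<close>
definition zmod_op :: "zmod \<Rightarrow> zmod" where
  "zmod_op M = \<lparr>dT = dT M, dB = dB M, tm = transpose_mat (tm M),
                up = transpose_mat (dn M), dn = transpose_mat (up M)\<rparr>"

definition zmor_dual :: "zmor \<Rightarrow> zmor" where
  "zmor_dual f = \<lparr>mT = transpose_mat (mT f), mB = transpose_mat (mB f)\<rparr>"

text \<open>(C^op)_i = (C_(-i))^op; its differential (C^op)_i -> (C^op)_(i-1) is the dual of
  d^C_(-i+1) : C_(-i+1) -> C_(-i).\<close>
definition cx_op :: "zcx \<Rightarrow> zcx" where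
  "cx_op C = \<lparr>obj = (\<lambda>i. zmod_op (obj C (- i))), dif = (\<lambda>i. zmor_dual (dif C (1 - i)))\<rparr>"

definition zeroM :: zmod where
  "zeroM = \<lparr>dT = 0, dB = 0, tm = 0\<^sub>m 0 0, up = 0\<^sub>m 0 0, dn = 0\<^sub>m 0 0\<rparr>"

definition HM :: zmod where
  "HM = \<lparr>dT = 1, dB = 1, tm = 1\<^sub>m 1, up = 1\<^sub>m 1, dn = 0\<^sub>m 1 1\<rparr>"

definition FM :: zmod where
  "FM = \<lparr>dT = 2, dB = 1,
         tm = mat_of_rows_list 2 [[0, 1], [1, 0]],
         up = mat_of_rows_list 1 [[1], [1]],
         dn = mat_of_rows_list 2 [[1, 1]]\<rparr>"

definition pFH :: zmor where
  "pFH = \<lparr>mT = mat_of_rows_list 2 [[1, 1]], mB = 0\<^sub>m 1 1\<rparr>"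

definition pHF :: zmor where
  "pHF = \<lparr>mT = mat_of_rows_list 1 [[1], [1]], mB = 1\<^sub>m 1\<rparr>"

definition uF :: zmor where
  "uF = \<lparr>mT = 1\<^sub>m 2 + tm FM, mB = 0\<^sub>m 1 1\<rparr>"

datatype kind = KZ | KH | KF

fun kmod :: "kind \<Rightarrow> zmod" where
  "kmod KZ = zeroM" | "kmod KH = HM" | "kmod KF = FM"

fun kdif :: "kind \<Rightarrow> kind \<Rightarrow> zmor" where
  "kdif KH KF = pHF"
| "kdif KF KF = uF"
| "kdif KF KH = pFH"
| "kdif a b = zzero (kmod a) (kmod b)"

definition mkcx :: "(int \<Rightarrow> kind) \<Rightarrow> zcx" where
  "mkcx K = \<lparr>obj = (\<lambda>i. kmod (K i)), dif = (\<lambda>i. kdif (K i) (K (i - 1)))\<rparr>"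

definition Acx :: "nat \<Rightarrow> zcx" where
  "Acx k = mkcx (\<lambda>i. if 0 \<le> i \<and> i \<le> int k then KF else KZ)"

definition Hcx :: "int \<Rightarrow> zcx" where
  "Hcx n =
    (if n = 0 then mkcx (\<lambda>i. if i = 0 then KH else KZ)
     else if n < 0 then
       mkcx (\<lambda>i. if i = - n then KH else if 0 \<le> i \<and> i \<le> - n - 1 then KF else KZ)
     else
       mkcx (\<lambda>i. if i = - n then KH else if - (n - 1) \<le> i \<and> i \<le> 0 then KF else KZ))"

definition Bcx :: "nat \<Rightarrow> zcx" where
  "Bcx r = mkcx (\<lambda>i. if i = 0 \<or> i = - (int r + 2) then KH
                     else if - (int r + 1) \<le> i \<and> i \<le> -1 then KF else KZ)"

end

theory Submission
  imports Defs
begin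


section \<open>Small finite computations over bit\<close>

lemma bit_all: "(\<forall>a::bit. P a) \<longleftrightarrow> P 0 \<and> P 1"
  by (metis bit_not_zero_iff)
lemma bit_ex: "(\<exists>a::bit. P a) \<longleftrightarrow> P 0 \<or> P 1"
  by (metis bit_not_zero_iff)

lemma less2: "(i::nat) < 2 \<longleftrightarrow> i = 0 \<or> i = 1" by auto
lemma all2: "(\<forall>i<(2::nat). P i) \<longleftrightarrow> P 0 \<and> P 1" by (auto simp: less2)
lemma all1: "(\<forall>i<(1::nat). P i) \<longleftrightarrow> P 0" by auto
lemma all1s: "(\<forall>i<Suc 0. P i) \<longleftrightarrow> P 0" by auto
lemma all0: "(\<forall>i<(0::nat). P i) \<longleftrightarrow> True" by auto
lemma sum2: "sum g {0..<2::nat} = g 0 + g 1" by (simp add: numeral_2_eq_2)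
lemma sum1: "sum g {0..<1::nat} = g 0" by simp
lemma sum1s: "sum g {0..<Suc 0} = g 0" by simp
lemma sum0: "sum g {0..<0::nat} = 0" by simp
lemma bit11: "(1::bit) + 1 = 0" by simp

definition v1 :: "bit \<Rightarrow> bit vec" where "v1 a = vec 1 (\<lambda>_. a)"
definition v2 :: "bit \<Rightarrow> bit \<Rightarrow> bit vec" where "v2 a b = vec 2 (\<lambda>i. if i = 0 then a else b)"
definition v0 :: "bit vec" where "v0 = vec 0 (\<lambda>_. 0)"

lemma cv0: "carrier_vec 0 = {v0}"
  unfolding v0_def by (auto intro!: eq_vecI)
lemma cv1: "carrier_vec 1 = range v1"
  unfolding v1_def by (auto intro!: eq_vecI)
lemma cv2: "carrier_vec 2 = {v2 a b | a b. True}"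
  unfolding v2_def
  apply (auto intro!: eq_vecI)
  subgoal for x apply (rule exI[of _ "x $ 0"], rule exI[of _ "x $ 1"]) 
    by (auto intro!: eq_vecI simp: less_2_cases_iff)
  done

lemma ball_cv2: "(\<forall>x\<in>carrier_vec 2. P x) \<longleftrightarrow> (\<forall>a b. P (v2 a b))" unfolding cv2 by auto
lemma bex_cv2: "(\<exists>x\<in>carrier_vec 2. P x) \<longleftrightarrow> (\<exists>a b. P (v2 a b))" unfolding cv2 by auto
lemma ball_cv1: "(\<forall>x\<in>carrier_vec 1. P x) \<longleftrightarrow> (\<forall>a. P (v1 a))" unfolding cv1 by auto
lemma bex_cv1: "(\<exists>x\<in>carrier_vec 1. P x) \<longleftrightarrow> (\<exists>a. P (v1 a))" unfolding cv1 by auto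
lemma ball_cv0: "(\<forall>x\<in>carrier_vec 0. P x) \<longleftrightarrow> P v0" unfolding cv0 by auto
lemma bex_cv0: "(\<exists>x\<in>carrier_vec 0. P x) \<longleftrightarrow> P v0" unfolding cv0 by auto

lemma mv00: "dim_row A = 0 \<Longrightarrow> dim_col A = 0 \<Longrightarrow> A *\<^sub>v (v0) = v0"
  by (auto simp: v0_def v1_def v2_def mult_mat_vec_def scalar_prod_def sum2 less2 intro!: eq_vecI)
lemma mv10: "dim_row A = 1 \<Longrightarrow> dim_col A = 0 \<Longrightarrow> A *\<^sub>v (v0) = v1 (0)"
  by (auto simp: v0_def v1_def v2_def mult_mat_vec_def scalar_prod_def sum2 less2 intro!: eq_vecI)
lemma mv20: "dim_row A = 2 \<Longrightarrow> dim_col A = 0 \<Longrightarrow> A *\<^sub>v (v0) = v2 (0) (0)"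
  by (auto simp: v0_def v1_def v2_def mult_mat_vec_def scalar_prod_def sum2 less2 intro!: eq_vecI)
lemma mv01: "dim_row A = 0 \<Longrightarrow> dim_col A = 1 \<Longrightarrow> A *\<^sub>v (v1 a) = v0"
  by (auto simp: v0_def v1_def v2_def mult_mat_vec_def scalar_prod_def sum2 less2 intro!: eq_vecI)
lemma mv11: "dim_row A = 1 \<Longrightarrow> dim_col A = 1 \<Longrightarrow> A *\<^sub>v (v1 a) = v1 (A $$ (0,0) * a)"
  by (auto simp: v0_def v1_def v2_def mult_mat_vec_def scalar_prod_def sum2 less2 intro!: eq_vecI)
lemma mv21: "dim_row A = 2 \<Longrightarrow> dim_col A = 1 \<Longrightarrow> A *\<^sub>v (v1 a) = v2 (A $$ (0,0) * a) (A $$ (1,0) * a)"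
  by (auto simp: v0_def v1_def v2_def mult_mat_vec_def scalar_prod_def sum2 less2 intro!: eq_vecI)
lemma mv02: "dim_row A = 0 \<Longrightarrow> dim_col A = 2 \<Longrightarrow> A *\<^sub>v (v2 a b) = v0"
  by (auto simp: v0_def v1_def v2_def mult_mat_vec_def scalar_prod_def sum2 less2 intro!: eq_vecI)
lemma mv12: "dim_row A = 1 \<Longrightarrow> dim_col A = 2 \<Longrightarrow> A *\<^sub>v (v2 a b) = v1 (A $$ (0,0) * a + A $$ (0,1) * b)"
  by (auto simp: v0_def v1_def v2_def mult_mat_vec_def scalar_prod_def sum2 less2 intro!: eq_vecI)
lemma mv22: "dim_row A = 2 \<Longrightarrow> dim_col A = 2 \<Longrightarrow> A *\<^sub>v (v2 a b) = v2 (A $$ (0,0) * a + A $$ (0,1) * b) (A $$ (1,0) * a + A $$ (1,1) * b)"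
  by (auto simp: v0_def v1_def v2_def mult_mat_vec_def scalar_prod_def sum2 less2 intro!: eq_vecI)

lemma v2add: "v2 a b + v2 c d = v2 (a+c) (b+d)" by (auto simp: v2_def less2 intro!: eq_vecI)
lemma v1add: "v1 a + v1 c = v1 (a+c)" by (auto simp: v1_def intro!: eq_vecI)
lemma v0add: "v0 + v0 = v0" by (auto simp: v0_def intro!: eq_vecI)
lemma v2eq: "v2 a b = v2 c d \<longleftrightarrow> a = c \<and> b = d" by (simp add: v2_def vec_eq_iff all2)
lemma v1eq: "v1 a = v1 c \<longleftrightarrow> a = c" by (auto simp: v1_def vec_eq_iff)
lemma zv2: "0\<^sub>v 2 = v2 0 0" by (auto simp: v2_def intro!: eq_vecI)
lemma zv1: "0\<^sub>v 1 = v1 0" by (auto simp: v1_def intro!: eq_vecI)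
lemma zv1s: "0\<^sub>v (Suc 0) = v1 0" by (auto simp: v1_def intro!: eq_vecI)
lemma zv0: "0\<^sub>v 0 = v0" by (auto simp: v0_def intro!: eq_vecI)

lemma M12: "dim_row (mat_of_rows_list 2 [[a,b]]) = 1" "dim_col (mat_of_rows_list 2 [[a,b]]) = 2"
  "mat_of_rows_list 2 [[a,b]] $$ (0,0) = a" "mat_of_rows_list 2 [[a,b]] $$ (0,1) = b"
  "mat_of_rows_list 2 [[a,b]] $$ (0,Suc 0) = b"
  by (auto simp: mat_of_rows_list_def)
lemma M21: "dim_row (mat_of_rows_list 1 [[a],[b]]) = 2" "dim_col (mat_of_rows_list 1 [[a],[b]]) = 1"
  "mat_of_rows_list 1 [[a],[b]] $$ (0,0) = a" "mat_of_rows_list 1 [[a],[b]] $$ (1,0) = b"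
  "mat_of_rows_list 1 [[a],[b]] $$ (Suc 0,0) = b"
  "dim_col (mat_of_rows_list (Suc 0) [[a],[b]]) = 1"
  "mat_of_rows_list (Suc 0) [[a],[b]] $$ (0,0) = a" "mat_of_rows_list (Suc 0) [[a],[b]] $$ (Suc 0,0) = b"
  "mat_of_rows_list (Suc 0) [[a],[b]] $$ (1,0) = b"
  "dim_row (mat_of_rows_list (Suc 0) [[a],[b]]) = 2"
  by (auto simp: mat_of_rows_list_def)
lemma M22: "dim_row (mat_of_rows_list 2 [[a,b],[c,d]]) = 2" "dim_col (mat_of_rows_list 2 [[a,b],[c,d]]) = 2"
  "mat_of_rows_list 2 [[a,b],[c,d]] $$ (0,0) = a" "mat_of_rows_list 2 [[a,b],[c,d]] $$ (0,1) = b"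
  "mat_of_rows_list 2 [[a,b],[c,d]] $$ (1,0) = c" "mat_of_rows_list 2 [[a,b],[c,d]] $$ (1,1) = d"
  "mat_of_rows_list 2 [[a,b],[c,d]] $$ (0,Suc 0) = b"
  "mat_of_rows_list 2 [[a,b],[c,d]] $$ (Suc 0,0) = c" "mat_of_rows_list 2 [[a,b],[c,d]] $$ (Suc 0,Suc 0) = d"
  by (auto simp: mat_of_rows_list_def)

lemma mult_entry: "i < dim_row A \<Longrightarrow> j < dim_col B \<Longrightarrow> dim_col A = dim_row B \<Longrightarrow>
   (A * B) $$ (i,j) = (\<Sum>k\<in>{0..<dim_row B}. A $$ (i,k) * B $$ (k,j))"
  by (simp add: scalar_prod_def)

declare add_bit_eq_xor[simp del] mult_bit_eq_and[simp del]


datatype ek = Z | H | F | S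

definition HSM :: zmod where
  "HSM = \<lparr>dT = 1, dB = 1, tm = 1\<^sub>m 1, up = 0\<^sub>m 1 1, dn = 1\<^sub>m 1\<rparr>"
definition pFS :: zmor where
  "pFS = \<lparr>mT = mat_of_rows_list 2 [[1, 1]], mB = 1\<^sub>m 1\<rparr>"
definition pSF :: zmor where
  "pSF = \<lparr>mT = mat_of_rows_list 1 [[1], [1]], mB = 0\<^sub>m 1 1\<rparr>"
definition idF :: zmor where
  "idF = \<lparr>mT = 1\<^sub>m 2, mB = 1\<^sub>m 1\<rparr>"
definition pHS :: zmor where
  "pHS = \<lparr>mT = 0\<^sub>m 1 1, mB = 1\<^sub>m 1\<rparr>"

lemma uF_eq: "uF = \<lparr>mT = mat_of_rows_list 2 [[1,1],[1,1]], mB = 0\<^sub>m 1 1\<rparr>"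
  by (rule zmor.equality, auto simp: uF_def FM_def mat_of_rows_list_def less_Suc_eq less2 intro!: eq_matI)
lemma FM_eq: "FM = \<lparr>dT = 2, dB = 1, tm = mat_of_rows_list 2 [[0, 1], [1, 0]],
         up = mat_of_rows_list 1 [[1], [1]], dn = mat_of_rows_list 2 [[1, 1]]\<rparr>" by (simp add: FM_def)

fun emod :: "ek \<Rightarrow> zmod" where
  "emod Z = zeroM" | "emod H = HM" | "emod F = FM" | "emod S = HSM"

fun edif :: "ek \<Rightarrow> ek \<Rightarrow> zmor" where
  "edif H F = pHF" | "edif F F = uF" | "edif F H = pFH" | "edif F S = pFS" | "edif S F = pSF"
| "edif a b = zzero (emod a) (emod b)"

fun fm1 :: "ek \<Rightarrow> ek \<Rightarrow> zmor" where
  "fm1 F F = idF" | "fm1 F S = pFS" | "fm1 H F = pHF" | "fm1 H S = pHS"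
| "fm1 a b = zzero (emod a) (emod b)"

fun fm2 :: "ek \<Rightarrow> ek \<Rightarrow> zmor" where
  "fm2 F F = uF" | "fm2 a b = zzero (emod a) (emod b)"

lemmas mat_simps = emod.simps edif.simps fm1.simps fm2.simps HSM_def pFS_def pSF_def idF_def pHS_def
   zeroM_def HM_def FM_eq pFH_def pHF_def uF_eq zzero_def zcomp_def
   zmod.simps zmor.simps zmor.ext_inject zmod.ext_inject
lemmas q_simps = ball_cv2 bex_cv2 ball_cv1 bex_cv1 ball_cv0 bex_cv0 bit_all bit_ex
lemmas mv_simps = mv00 mv01 mv02 mv10 mv11 mv12 mv20 mv21 mv22 M12 M21 M22
   index_one_mat index_zero_mat dim_row_mat dim_col_mat zv2 zv1 zv0 zv1s
lemma v0nil: "v0 = vNil" by (auto simp: v0_def intro!: eq_vecI)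
lemma vnn: "vNil + vNil = (vNil :: bit vec)" by (auto intro!: eq_vecI)
lemmas ar_simps = v0nil vnn v2add v1add v0add v2eq v1eq bit11 add_0 add_0_right mult_1 mult_1_right
   mult_zero_left mult_zero_right zero_neq_one one_neq_zero simp_thms
lemma dmr: "dim_row (A * B) = dim_row A" by simp
lemma dmc: "dim_col (A * B) = dim_col B" by simp
lemmas me_simps = mat_eq_iff mult_entry all2 all1 all1s all0 sum2 sum1 sum1s sum0 M12 M21 M22
   index_one_mat index_zero_mat index_add_mat bit11 dmr dmc


lemma meq: "A = B \<longleftrightarrow> dim_row A = dim_row B \<and> dim_col A = dim_col B \<and> (\<forall>i<dim_row B. \<forall>j<dim_col B. A $$ (i,j) = B $$ (i,j))"
  using mat_eq_iff[of A B] by blast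


lemmas me_simps2 = mult_entry all2 all1 all1s all0 sum2 sum1 sum1s sum0 M12 M21 M22
   index_one_mat index_zero_mat index_add_mat bit11 dmr dmc



lemmas dim_simps = index_mult_mat(2) index_mult_mat(3) index_add_mat(2) index_add_mat(3)
  index_one_mat(2) index_one_mat(3) index_zero_mat(2) index_zero_mat(3) M12 M21 M22 One_nat_def
  all2 all1s all0 simp_thms

lemmas ent_simps = scalar_prod_def sum2 sum1s sum0 M12 M21 M22 bit11


lemma emod_zmod: "is_zmod (emod a)"
  by (cases a; simp only: is_zmod_def mat_simps meq carrier_mat_def mem_Collect_eq; simp only: dim_simps; simp add: ent_simps)

lemma edif_zmor: "is_zmor (emod a) (emod b) (edif a b)"
  by (cases a; cases b; simp only: is_zmor_def mat_simps meq carrier_mat_def mem_Collect_eq; simp only: dim_simps; simp add: ent_simps)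

definition ok3 :: "ek \<Rightarrow> ek \<Rightarrow> ek \<Rightarrow> bool" where
  "ok3 a b c \<longleftrightarrow> \<not> ((a = H \<and> b = F \<and> c = S) \<or> (a = F \<and> b = H \<and> c = F) \<or> (a = F \<and> b = S \<and> c = F))"



lemma comp_ok: "ok3 a b c \<Longrightarrow> zcomp (edif b c) (edif a b) = zzero (emod a) (emod c)"
  unfolding ok3_def
  by (cases a; cases b; cases c; simp only: ek.simps simp_thms mat_simps meq carrier_mat_def mem_Collect_eq; (simp only: dim_simps)?; simp add: ent_simps)

definition hgood :: "nat \<Rightarrow> nat \<Rightarrow> nat \<Rightarrow> bit mat \<Rightarrow> bit mat \<Rightarrow> nat \<Rightarrow> nat \<Rightarrow> nat \<Rightarrow> bit mat \<Rightarrow> bit mat \<Rightarrow> bit mat \<Rightarrow> bool" where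
  "hgood c0 c1 c2 eC1 eC2 d0 d1 d2 eD1 eD2 g \<longleftrightarrow>
    (\<forall>z \<in> carrier_vec d1. eD1 *\<^sub>v z = 0\<^sub>v d0 \<longrightarrow>
         (\<exists>x \<in> carrier_vec c1. eC1 *\<^sub>v x = 0\<^sub>v c0 \<and>
            (\<exists>y \<in> carrier_vec d2. z = g *\<^sub>v x + eD2 *\<^sub>v y))) \<and>
    (\<forall>x \<in> carrier_vec c1.
         eC1 *\<^sub>v x = 0\<^sub>v c0 \<and>
         (\<exists>y \<in> carrier_vec d2. g *\<^sub>v x = eD2 *\<^sub>v y) \<longrightarrow>
         (\<exists>w \<in> carrier_vec c2. x = eC2 *\<^sub>v w))"

definition good :: "(ek \<Rightarrow> ek \<Rightarrow> zmor) \<Rightarrow> ek \<Rightarrow> ek \<Rightarrow> ek \<Rightarrow> ek \<Rightarrow> ek \<Rightarrow> ek \<Rightarrow> bool" where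
  "good fm a0 a1 a2 b0 b1 b2 \<longleftrightarrow>
     is_zmor (emod a1) (emod b1) (fm a1 b1) \<and>
     zcomp (edif b1 b0) (fm a1 b1) = zcomp (fm a0 b0) (edif a1 a0) \<and>
     hgood (dT (emod a0)) (dT (emod a1)) (dT (emod a2)) (mT (edif a1 a0)) (mT (edif a2 a1))
           (dT (emod b0)) (dT (emod b1)) (dT (emod b2)) (mT (edif b1 b0)) (mT (edif b2 b1)) (mT (fm a1 b1)) \<and>
     hgood (dB (emod a0)) (dB (emod a1)) (dB (emod a2)) (mB (edif a1 a0)) (mB (edif a2 a1))
           (dB (emod b0)) (dB (emod b1)) (dB (emod b2)) (mB (edif b1 b0)) (mB (edif b2 b1)) (mB (fm a1 b1))"

lemma good_I:
  assumes "is_zmor (emod a1) (emod b1) (fm a1 b1)"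
    "zcomp (edif b1 b0) (fm a1 b1) = zcomp (fm a0 b0) (edif a1 a0)"
    "hgood (dT (emod a0)) (dT (emod a1)) (dT (emod a2)) (mT (edif a1 a0)) (mT (edif a2 a1))
           (dT (emod b0)) (dT (emod b1)) (dT (emod b2)) (mT (edif b1 b0)) (mT (edif b2 b1)) (mT (fm a1 b1))"
    "hgood (dB (emod a0)) (dB (emod a1)) (dB (emod a2)) (mB (edif a1 a0)) (mB (edif a2 a1))
           (dB (emod b0)) (dB (emod b1)) (dB (emod b2)) (mB (edif b1 b0)) (mB (edif b2 b1)) (mB (fm a1 b1))"
  shows "good fm a0 a1 a2 b0 b1 b2"
  using assms unfolding good_def by blast

lemma g_fm1_FFFFFF[simp]: "good fm1 F F F F F F"
  apply (rule good_I)
  apply (simp only: is_zmor_def mat_simps meq carrier_mat_def mem_Collect_eq; (simp only: dim_simps)?; simp add: ent_simps)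
  apply (simp only: ek.simps simp_thms mat_simps meq carrier_mat_def mem_Collect_eq; (simp only: dim_simps)?; simp add: ent_simps)
  apply (simp only: hgood_def mat_simps; simp only: q_simps; simp add: mv_simps; simp only: ar_simps)
  apply (simp only: hgood_def mat_simps; simp only: q_simps; simp add: mv_simps; simp only: ar_simps)
  done
lemma g_fm1_FFFFFS[simp]: "good fm1 F F F F F S"
  apply (rule good_I)
  apply (simp only: is_zmor_def mat_simps meq carrier_mat_def mem_Collect_eq; (simp only: dim_simps)?; simp add: ent_simps)
  apply (simp only: ek.simps simp_thms mat_simps meq carrier_mat_def mem_Collect_eq; (simp only: dim_simps)?; simp add: ent_simps)
  apply (simp only: hgood_def mat_simps; simp only: q_simps; simp add: mv_simps; simp only: ar_simps)
  apply (simp only: hgood_def mat_simps; simp only: q_simps; simp add: mv_simps; simp only: ar_simps)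
  done
lemma g_fm1_FFFFSZ[simp]: "good fm1 F F F F S Z"
  apply (rule good_I)
  apply (simp only: is_zmor_def mat_simps meq carrier_mat_def mem_Collect_eq; (simp only: dim_simps)?; simp add: ent_simps)
  apply (simp only: ek.simps simp_thms mat_simps meq carrier_mat_def mem_Collect_eq; (simp only: dim_simps)?; simp add: ent_simps)
  apply (simp only: hgood_def mat_simps; simp only: q_simps; simp add: mv_simps; simp only: ar_simps)
  apply (simp only: hgood_def mat_simps; simp only: q_simps; simp add: mv_simps; simp only: ar_simps)
  done
lemma g_fm1_FFHSZZ[simp]: "good fm1 F F H S Z Z"
  apply (rule good_I)
  apply (simp only: is_zmor_def mat_simps meq carrier_mat_def mem_Collect_eq; (simp only: dim_simps)?; simp add: ent_simps)
  apply (simp only: ek.simps simp_thms mat_simps meq carrier_mat_def mem_Collect_eq; (simp only: dim_simps)?; simp add: ent_simps)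
  apply (simp only: hgood_def mat_simps; simp only: q_simps; simp add: mv_simps; simp only: ar_simps)
  apply (simp only: hgood_def mat_simps; simp only: q_simps; simp add: mv_simps; simp only: ar_simps)
  done
lemma g_fm1_FFZFFZ[simp]: "good fm1 F F Z F F Z"
  apply (rule good_I)
  apply (simp only: is_zmor_def mat_simps meq carrier_mat_def mem_Collect_eq; (simp only: dim_simps)?; simp add: ent_simps)
  apply (simp only: ek.simps simp_thms mat_simps meq carrier_mat_def mem_Collect_eq; (simp only: dim_simps)?; simp add: ent_simps)
  apply (simp only: hgood_def mat_simps; simp only: q_simps; simp add: mv_simps; simp only: ar_simps)
  apply (simp only: hgood_def mat_simps; simp only: q_simps; simp add: mv_simps; simp only: ar_simps)
  done
lemma g_fm1_FHZZZZ[simp]: "good fm1 F H Z Z Z Z"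
  apply (rule good_I)
  apply (simp only: is_zmor_def mat_simps meq carrier_mat_def mem_Collect_eq; (simp only: dim_simps)?; simp add: ent_simps)
  apply (simp only: ek.simps simp_thms mat_simps meq carrier_mat_def mem_Collect_eq; (simp only: dim_simps)?; simp add: ent_simps)
  apply (simp only: hgood_def mat_simps; simp only: q_simps; simp add: mv_simps; simp only: ar_simps)
  apply (simp only: hgood_def mat_simps; simp only: q_simps; simp add: mv_simps; simp only: ar_simps)
  done
lemma g_fm1_FZZFZZ[simp]: "good fm1 F Z Z F Z Z"
  apply (rule good_I)
  apply (simp only: is_zmor_def mat_simps meq carrier_mat_def mem_Collect_eq; (simp only: dim_simps)?; simp add: ent_simps)
  apply (simp only: ek.simps simp_thms mat_simps meq carrier_mat_def mem_Collect_eq; (simp only: dim_simps)?; simp add: ent_simps)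
  apply (simp only: hgood_def mat_simps; simp only: q_simps; simp add: mv_simps; simp only: ar_simps)
  apply (simp only: hgood_def mat_simps; simp only: q_simps; simp add: mv_simps; simp only: ar_simps)
  done
lemma g_fm1_HFFFFF[simp]: "good fm1 H F F F F F"
  apply (rule good_I)
  apply (simp only: is_zmor_def mat_simps meq carrier_mat_def mem_Collect_eq; (simp only: dim_simps)?; simp add: ent_simps)
  apply (simp only: ek.simps simp_thms mat_simps meq carrier_mat_def mem_Collect_eq; (simp only: dim_simps)?; simp add: ent_simps)
  apply (simp only: hgood_def mat_simps; simp only: q_simps; simp add: mv_simps; simp only: ar_simps)
  apply (simp only: hgood_def mat_simps; simp only: q_simps; simp add: mv_simps; simp only: ar_simps)
  done
lemma g_fm1_HFFFFS[simp]: "good fm1 H F F F F S"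
  apply (rule good_I)
  apply (simp only: is_zmor_def mat_simps meq carrier_mat_def mem_Collect_eq; (simp only: dim_simps)?; simp add: ent_simps)
  apply (simp only: ek.simps simp_thms mat_simps meq carrier_mat_def mem_Collect_eq; (simp only: dim_simps)?; simp add: ent_simps)
  apply (simp only: hgood_def mat_simps; simp only: q_simps; simp add: mv_simps; simp only: ar_simps)
  apply (simp only: hgood_def mat_simps; simp only: q_simps; simp add: mv_simps; simp only: ar_simps)
  done
lemma g_fm1_HFFFSZ[simp]: "good fm1 H F F F S Z"
  apply (rule good_I)
  apply (simp only: is_zmor_def mat_simps meq carrier_mat_def mem_Collect_eq; (simp only: dim_simps)?; simp add: ent_simps)
  apply (simp only: ek.simps simp_thms mat_simps meq carrier_mat_def mem_Collect_eq; (simp only: dim_simps)?; simp add: ent_simps)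
  apply (simp only: hgood_def mat_simps; simp only: q_simps; simp add: mv_simps; simp only: ar_simps)
  apply (simp only: hgood_def mat_simps; simp only: q_simps; simp add: mv_simps; simp only: ar_simps)
  done
lemma g_fm1_HFHSZZ[simp]: "good fm1 H F H S Z Z"
  apply (rule good_I)
  apply (simp only: is_zmor_def mat_simps meq carrier_mat_def mem_Collect_eq; (simp only: dim_simps)?; simp add: ent_simps)
  apply (simp only: ek.simps simp_thms mat_simps meq carrier_mat_def mem_Collect_eq; (simp only: dim_simps)?; simp add: ent_simps)
  apply (simp only: hgood_def mat_simps; simp only: q_simps; simp add: mv_simps; simp only: ar_simps)
  apply (simp only: hgood_def mat_simps; simp only: q_simps; simp add: mv_simps; simp only: ar_simps)
  done
lemma g_fm1_HFZFFZ[simp]: "good fm1 H F Z F F Z"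
  apply (rule good_I)
  apply (simp only: is_zmor_def mat_simps meq carrier_mat_def mem_Collect_eq; (simp only: dim_simps)?; simp add: ent_simps)
  apply (simp only: ek.simps simp_thms mat_simps meq carrier_mat_def mem_Collect_eq; (simp only: dim_simps)?; simp add: ent_simps)
  apply (simp only: hgood_def mat_simps; simp only: q_simps; simp add: mv_simps; simp only: ar_simps)
  apply (simp only: hgood_def mat_simps; simp only: q_simps; simp add: mv_simps; simp only: ar_simps)
  done
lemma g_fm1_HZZFZZ[simp]: "good fm1 H Z Z F Z Z"
  apply (rule good_I)
  apply (simp only: is_zmor_def mat_simps meq carrier_mat_def mem_Collect_eq; (simp only: dim_simps)?; simp add: ent_simps)
  apply (simp only: ek.simps simp_thms mat_simps meq carrier_mat_def mem_Collect_eq; (simp only: dim_simps)?; simp add: ent_simps)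
  apply (simp only: hgood_def mat_simps; simp only: q_simps; simp add: mv_simps; simp only: ar_simps)
  apply (simp only: hgood_def mat_simps; simp only: q_simps; simp add: mv_simps; simp only: ar_simps)
  done
lemma g_fm1_HZZZZZ[simp]: "good fm1 H Z Z Z Z Z"
  apply (rule good_I)
  apply (simp only: is_zmor_def mat_simps meq carrier_mat_def mem_Collect_eq; (simp only: dim_simps)?; simp add: ent_simps)
  apply (simp only: ek.simps simp_thms mat_simps meq carrier_mat_def mem_Collect_eq; (simp only: dim_simps)?; simp add: ent_simps)
  apply (simp only: hgood_def mat_simps; simp only: q_simps; simp add: mv_simps; simp only: ar_simps)
  apply (simp only: hgood_def mat_simps; simp only: q_simps; simp add: mv_simps; simp only: ar_simps)
  done
lemma g_fm1_ZFFZFF[simp]: "good fm1 Z F F Z F F"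
  apply (rule good_I)
  apply (simp only: is_zmor_def mat_simps meq carrier_mat_def mem_Collect_eq; (simp only: dim_simps)?; simp add: ent_simps)
  apply (simp only: ek.simps simp_thms mat_simps meq carrier_mat_def mem_Collect_eq; (simp only: dim_simps)?; simp add: ent_simps)
  apply (simp only: hgood_def mat_simps; simp only: q_simps; simp add: mv_simps; simp only: ar_simps)
  apply (simp only: hgood_def mat_simps; simp only: q_simps; simp add: mv_simps; simp only: ar_simps)
  done
lemma g_fm1_ZFFZFS[simp]: "good fm1 Z F F Z F S"
  apply (rule good_I)
  apply (simp only: is_zmor_def mat_simps meq carrier_mat_def mem_Collect_eq; (simp only: dim_simps)?; simp add: ent_simps)
  apply (simp only: ek.simps simp_thms mat_simps meq carrier_mat_def mem_Collect_eq; (simp only: dim_simps)?; simp add: ent_simps)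
  apply (simp only: hgood_def mat_simps; simp only: q_simps; simp add: mv_simps; simp only: ar_simps)
  apply (simp only: hgood_def mat_simps; simp only: q_simps; simp add: mv_simps; simp only: ar_simps)
  done
lemma g_fm1_ZFFZSZ[simp]: "good fm1 Z F F Z S Z"
  apply (rule good_I)
  apply (simp only: is_zmor_def mat_simps meq carrier_mat_def mem_Collect_eq; (simp only: dim_simps)?; simp add: ent_simps)
  apply (simp only: ek.simps simp_thms mat_simps meq carrier_mat_def mem_Collect_eq; (simp only: dim_simps)?; simp add: ent_simps)
  apply (simp only: hgood_def mat_simps; simp only: q_simps; simp add: mv_simps; simp only: ar_simps)
  apply (simp only: hgood_def mat_simps; simp only: q_simps; simp add: mv_simps; simp only: ar_simps)
  done
lemma g_fm1_ZHFFFF[simp]: "good fm1 Z H F F F F"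
  apply (rule good_I)
  apply (simp only: is_zmor_def mat_simps meq carrier_mat_def mem_Collect_eq; (simp only: dim_simps)?; simp add: ent_simps)
  apply (simp only: ek.simps simp_thms mat_simps meq carrier_mat_def mem_Collect_eq; (simp only: dim_simps)?; simp add: ent_simps)
  apply (simp only: hgood_def mat_simps; simp only: q_simps; simp add: mv_simps; simp only: ar_simps)
  apply (simp only: hgood_def mat_simps; simp only: q_simps; simp add: mv_simps; simp only: ar_simps)
  done
lemma g_fm1_ZHFFFS[simp]: "good fm1 Z H F F F S"
  apply (rule good_I)
  apply (simp only: is_zmor_def mat_simps meq carrier_mat_def mem_Collect_eq; (simp only: dim_simps)?; simp add: ent_simps)
  apply (simp only: ek.simps simp_thms mat_simps meq carrier_mat_def mem_Collect_eq; (simp only: dim_simps)?; simp add: ent_simps)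
  apply (simp only: hgood_def mat_simps; simp only: q_simps; simp add: mv_simps; simp only: ar_simps)
  apply (simp only: hgood_def mat_simps; simp only: q_simps; simp add: mv_simps; simp only: ar_simps)
  done
lemma g_fm1_ZHFFSZ[simp]: "good fm1 Z H F F S Z"
  apply (rule good_I)
  apply (simp only: is_zmor_def mat_simps meq carrier_mat_def mem_Collect_eq; (simp only: dim_simps)?; simp add: ent_simps)
  apply (simp only: ek.simps simp_thms mat_simps meq carrier_mat_def mem_Collect_eq; (simp only: dim_simps)?; simp add: ent_simps)
  apply (simp only: hgood_def mat_simps; simp only: q_simps; simp add: mv_simps; simp only: ar_simps)
  apply (simp only: hgood_def mat_simps; simp only: q_simps; simp add: mv_simps; simp only: ar_simps)
  done
lemma g_fm1_ZHZFFZ[simp]: "good fm1 Z H Z F F Z"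
  apply (rule good_I)
  apply (simp only: is_zmor_def mat_simps meq carrier_mat_def mem_Collect_eq; (simp only: dim_simps)?; simp add: ent_simps)
  apply (simp only: ek.simps simp_thms mat_simps meq carrier_mat_def mem_Collect_eq; (simp only: dim_simps)?; simp add: ent_simps)
  apply (simp only: hgood_def mat_simps; simp only: q_simps; simp add: mv_simps; simp only: ar_simps)
  apply (simp only: hgood_def mat_simps; simp only: q_simps; simp add: mv_simps; simp only: ar_simps)
  done
lemma g_fm1_ZZFZZF[simp]: "good fm1 Z Z F Z Z F"
  apply (rule good_I)
  apply (simp only: is_zmor_def mat_simps meq carrier_mat_def mem_Collect_eq; (simp only: dim_simps)?; simp add: ent_simps)
  apply (simp only: ek.simps simp_thms mat_simps meq carrier_mat_def mem_Collect_eq; (simp only: dim_simps)?; simp add: ent_simps)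
  apply (simp only: hgood_def mat_simps; simp only: q_simps; simp add: mv_simps; simp only: ar_simps)
  apply (simp only: hgood_def mat_simps; simp only: q_simps; simp add: mv_simps; simp only: ar_simps)
  done
lemma g_fm1_ZZFZZS[simp]: "good fm1 Z Z F Z Z S"
  apply (rule good_I)
  apply (simp only: is_zmor_def mat_simps meq carrier_mat_def mem_Collect_eq; (simp only: dim_simps)?; simp add: ent_simps)
  apply (simp only: ek.simps simp_thms mat_simps meq carrier_mat_def mem_Collect_eq; (simp only: dim_simps)?; simp add: ent_simps)
  apply (simp only: hgood_def mat_simps; simp only: q_simps; simp add: mv_simps; simp only: ar_simps)
  apply (simp only: hgood_def mat_simps; simp only: q_simps; simp add: mv_simps; simp only: ar_simps)
  done
lemma g_fm1_ZZHSFF[simp]: "good fm1 Z Z H S F F"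
  apply (rule good_I)
  apply (simp only: is_zmor_def mat_simps meq carrier_mat_def mem_Collect_eq; (simp only: dim_simps)?; simp add: ent_simps)
  apply (simp only: ek.simps simp_thms mat_simps meq carrier_mat_def mem_Collect_eq; (simp only: dim_simps)?; simp add: ent_simps)
  apply (simp only: hgood_def mat_simps; simp only: q_simps; simp add: mv_simps; simp only: ar_simps)
  apply (simp only: hgood_def mat_simps; simp only: q_simps; simp add: mv_simps; simp only: ar_simps)
  done
lemma g_fm1_ZZHSFS[simp]: "good fm1 Z Z H S F S"
  apply (rule good_I)
  apply (simp only: is_zmor_def mat_simps meq carrier_mat_def mem_Collect_eq; (simp only: dim_simps)?; simp add: ent_simps)
  apply (simp only: ek.simps simp_thms mat_simps meq carrier_mat_def mem_Collect_eq; (simp only: dim_simps)?; simp add: ent_simps)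
  apply (simp only: hgood_def mat_simps; simp only: q_simps; simp add: mv_simps; simp only: ar_simps)
  apply (simp only: hgood_def mat_simps; simp only: q_simps; simp add: mv_simps; simp only: ar_simps)
  done
lemma g_fm1_ZZZZSF[simp]: "good fm1 Z Z Z Z S F"
  apply (rule good_I)
  apply (simp only: is_zmor_def mat_simps meq carrier_mat_def mem_Collect_eq; (simp only: dim_simps)?; simp add: ent_simps)
  apply (simp only: ek.simps simp_thms mat_simps meq carrier_mat_def mem_Collect_eq; (simp only: dim_simps)?; simp add: ent_simps)
  apply (simp only: hgood_def mat_simps; simp only: q_simps; simp add: mv_simps; simp only: ar_simps)
  apply (simp only: hgood_def mat_simps; simp only: q_simps; simp add: mv_simps; simp only: ar_simps)
  done
lemma g_fm1_ZZZZZS[simp]: "good fm1 Z Z Z Z Z S"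
  apply (rule good_I)
  apply (simp only: is_zmor_def mat_simps meq carrier_mat_def mem_Collect_eq; (simp only: dim_simps)?; simp add: ent_simps)
  apply (simp only: ek.simps simp_thms mat_simps meq carrier_mat_def mem_Collect_eq; (simp only: dim_simps)?; simp add: ent_simps)
  apply (simp only: hgood_def mat_simps; simp only: q_simps; simp add: mv_simps; simp only: ar_simps)
  apply (simp only: hgood_def mat_simps; simp only: q_simps; simp add: mv_simps; simp only: ar_simps)
  done
lemma g_fm1_ZZZZZZ[simp]: "good fm1 Z Z Z Z Z Z"
  apply (rule good_I)
  apply (simp only: is_zmor_def mat_simps meq carrier_mat_def mem_Collect_eq; (simp only: dim_simps)?; simp add: ent_simps)
  apply (simp only: ek.simps simp_thms mat_simps meq carrier_mat_def mem_Collect_eq; (simp only: dim_simps)?; simp add: ent_simps)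
  apply (simp only: hgood_def mat_simps; simp only: q_simps; simp add: mv_simps; simp only: ar_simps)
  apply (simp only: hgood_def mat_simps; simp only: q_simps; simp add: mv_simps; simp only: ar_simps)
  done
lemma g_fm2_FHZFZZ[simp]: "good fm2 F H Z F Z Z"
  apply (rule good_I)
  apply (simp only: is_zmor_def mat_simps meq carrier_mat_def mem_Collect_eq; (simp only: dim_simps)?; simp add: ent_simps)
  apply (simp only: ek.simps simp_thms mat_simps meq carrier_mat_def mem_Collect_eq; (simp only: dim_simps)?; simp add: ent_simps)
  apply (simp only: hgood_def mat_simps; simp only: q_simps; simp add: mv_simps; simp only: ar_simps)
  apply (simp only: hgood_def mat_simps; simp only: q_simps; simp add: mv_simps; simp only: ar_simps)
  done
lemma g_fm2_HZZZZZ[simp]: "good fm2 H Z Z Z Z Z"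
  apply (rule good_I)
  apply (simp only: is_zmor_def mat_simps meq carrier_mat_def mem_Collect_eq; (simp only: dim_simps)?; simp add: ent_simps)
  apply (simp only: ek.simps simp_thms mat_simps meq carrier_mat_def mem_Collect_eq; (simp only: dim_simps)?; simp add: ent_simps)
  apply (simp only: hgood_def mat_simps; simp only: q_simps; simp add: mv_simps; simp only: ar_simps)
  apply (simp only: hgood_def mat_simps; simp only: q_simps; simp add: mv_simps; simp only: ar_simps)
  done
lemma g_fm2_ZFHSFZ[simp]: "good fm2 Z F H S F Z"
  apply (rule good_I)
  apply (simp only: is_zmor_def mat_simps meq carrier_mat_def mem_Collect_eq; (simp only: dim_simps)?; simp add: ent_simps)
  apply (simp only: ek.simps simp_thms mat_simps meq carrier_mat_def mem_Collect_eq; (simp only: dim_simps)?; simp add: ent_simps)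
  apply (simp only: hgood_def mat_simps; simp only: q_simps; simp add: mv_simps; simp only: ar_simps)
  apply (simp only: hgood_def mat_simps; simp only: q_simps; simp add: mv_simps; simp only: ar_simps)
  done
lemma g_fm2_ZZFZSF[simp]: "good fm2 Z Z F Z S F"
  apply (rule good_I)
  apply (simp only: is_zmor_def mat_simps meq carrier_mat_def mem_Collect_eq; (simp only: dim_simps)?; simp add: ent_simps)
  apply (simp only: ek.simps simp_thms mat_simps meq carrier_mat_def mem_Collect_eq; (simp only: dim_simps)?; simp add: ent_simps)
  apply (simp only: hgood_def mat_simps; simp only: q_simps; simp add: mv_simps; simp only: ar_simps)
  apply (simp only: hgood_def mat_simps; simp only: q_simps; simp add: mv_simps; simp only: ar_simps)
  done
lemma g_fm2_ZZZZZS[simp]: "good fm2 Z Z Z Z Z S"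
  apply (rule good_I)
  apply (simp only: is_zmor_def mat_simps meq carrier_mat_def mem_Collect_eq; (simp only: dim_simps)?; simp add: ent_simps)
  apply (simp only: ek.simps simp_thms mat_simps meq carrier_mat_def mem_Collect_eq; (simp only: dim_simps)?; simp add: ent_simps)
  apply (simp only: hgood_def mat_simps; simp only: q_simps; simp add: mv_simps; simp only: ar_simps)
  apply (simp only: hgood_def mat_simps; simp only: q_simps; simp add: mv_simps; simp only: ar_simps)
  done
lemma g_fm2_ZZZZZZ[simp]: "good fm2 Z Z Z Z Z Z"
  apply (rule good_I)
  apply (simp only: is_zmor_def mat_simps meq carrier_mat_def mem_Collect_eq; (simp only: dim_simps)?; simp add: ent_simps)
  apply (simp only: ek.simps simp_thms mat_simps meq carrier_mat_def mem_Collect_eq; (simp only: dim_simps)?; simp add: ent_simps)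
  apply (simp only: hgood_def mat_simps; simp only: q_simps; simp add: mv_simps; simp only: ar_simps)
  apply (simp only: hgood_def mat_simps; simp only: q_simps; simp add: mv_simps; simp only: ar_simps)
  done


definition emk :: "(int \<Rightarrow> ek) \<Rightarrow> zcx" where
  "emk L = \<lparr>obj = (\<lambda>i. emod (L i)), dif = (\<lambda>i. edif (L i) (L (i - 1)))\<rparr>"

fun emb :: "kind \<Rightarrow> ek" where "emb KZ = Z" | "emb KH = H" | "emb KF = F"
fun opk :: "kind \<Rightarrow> ek" where "opk KZ = Z" | "opk KH = S" | "opk KF = F"

lemma kmod_emb: "kmod a = emod (emb a)" by (cases a) simp_all
lemma kdif_emb: "kdif a b = edif (emb a) (emb b)" by (cases a; cases b) simp_all
lemma mkcx_emk: "mkcx K = emk (\<lambda>i. emb (K i))"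
  by (simp add: mkcx_def emk_def kmod_emb kdif_emb)

lemma susp_emk: "\<Sigma> n (emk L) = emk (\<lambda>i. L (i - n))"
  by (simp add: susp_def emk_def algebra_simps)


lemma op_FM: "zmod_op FM = FM"
  apply (simp only: zmod_op_def mat_simps meq)
  apply (simp only: dim_simps index_transpose_mat(2) index_transpose_mat(3))
  apply (simp add: ent_simps)
  done
lemma op_HM: "zmod_op HM = HSM"
  apply (simp only: zmod_op_def mat_simps meq)
  apply (simp only: dim_simps index_transpose_mat(2) index_transpose_mat(3))
  apply (simp add: ent_simps)
  done
lemma op_zeroM: "zmod_op zeroM = zeroM"
  apply (simp only: zmod_op_def mat_simps meq)
  apply (simp only: dim_simps index_transpose_mat(2) index_transpose_mat(3))
  done
lemma du_pHF: "zmor_dual pHF = pFS"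
  apply (simp only: zmor_dual_def mat_simps meq)
  apply (simp only: dim_simps index_transpose_mat(2) index_transpose_mat(3))
  apply (simp add: ent_simps)
  done
lemma du_pFH: "zmor_dual pFH = pSF"
  apply (simp only: zmor_dual_def mat_simps meq)
  apply (simp only: dim_simps index_transpose_mat(2) index_transpose_mat(3))
  apply (simp add: ent_simps)
  done
lemma du_uF: "zmor_dual uF = uF"
  apply (simp only: zmor_dual_def mat_simps meq)
  apply (simp only: dim_simps index_transpose_mat(2) index_transpose_mat(3))
  apply (simp add: ent_simps)
  done
lemma du_zero: "zmor_dual (zzero M N) = zzero N M"
  by (simp add: zmor_dual_def zzero_def)

lemma zmod_op_k: "zmod_op (kmod a) = emod (opk a)"
  by (cases a) (simp_all add: op_FM op_HM op_zeroM)

lemma dims_opk: "dT (emod (opk a)) = dT (kmod a)" "dB (emod (opk a)) = dB (kmod a)"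
  by (cases a; simp add: HSM_def HM_def zeroM_def FM_def)+

lemma dual_k: "zmor_dual (kdif b a) = edif (opk a) (opk b)"
  by (cases a; cases b) (simp_all add: du_pHF du_pFH du_uF du_zero, simp_all add: zzero_def HSM_def HM_def zeroM_def)

lemma op_emk: "cx_op (mkcx K) = emk (\<lambda>i. opk (K (- i)))"
  by (simp add: cx_op_def mkcx_def emk_def zmod_op_k dual_k)

lemma is_complex_emk:
  assumes "\<And>i. ok3 (L i) (L (i - 1)) (L (i - 2))"
  shows "is_complex (emk L)"
proof -
  have e: "\<And>i::int. i - 1 - 1 = i - 2" by simp
  show ?thesis
    unfolding is_complex_def emk_def
    using emod_zmod edif_zmor comp_ok[OF assms] by (simp add: e)
qed

lemma qiso_emk:
  assumes g: "\<And>i. good fm (KC (i - 1)) (KC i) (KC (i + 1)) (KD (i - 1)) (KD i) (KD (i + 1))"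
  shows "is_quasi_iso (emk KC) (emk KD) (\<lambda>i. fm (KC i) (KD i))"
proof -
  note gg = g[unfolded good_def hgood_def]
  show ?thesis
    unfolding is_quasi_iso_def is_chain_map_def vs_homology_iso_def emk_def
    using gg by simp
qed

lemma D_iso_step:
  assumes "is_complex (emk KC)" "is_complex (emk KD)" "is_quasi_iso (emk KC) (emk KD) f"
  shows "emk KD \<simeq>\<^sub>D emk KC"
  unfolding D_iso_def qiso_rel_def using assms by (auto intro!: r_into_rtranclp)



section \<open>(a)\<close>

definition LA :: "nat \<Rightarrow> int \<Rightarrow> ek" where
  "LA k i = (if - int k \<le> i \<and> i \<le> 0 then F else Z)"

lemma A_op: "cx_op (Acx k) = emk (LA k)"
  unfolding Acx_def op_emk by (rule arg_cong[where f=emk]) (auto simp: LA_def fun_eq_iff)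

lemma A_susp: "\<Sigma> (- int k) (Acx k) = emk (LA k)"
  unfolding Acx_def mkcx_emk susp_emk by (rule arg_cong[where f=emk]) (auto simp: LA_def fun_eq_iff)

lemma A_cx: "is_complex (emk (LA k))"
  by (rule is_complex_emk) (auto simp: LA_def ok3_def)

lemma part_a: "cx_op (Acx k) \<simeq>\<^sub>D \<Sigma> (- int k) (Acx k)"
  unfolding A_op A_susp D_iso_def using A_cx by simp

section \<open>(b), n nonnegative\<close>

definition LCb :: "int \<Rightarrow> int \<Rightarrow> ek" where
  "LCb n i = (if i = n + 2 then H else if 0 \<le> i \<and> i \<le> n + 1 then F else Z)"
definition LDb :: "int \<Rightarrow> int \<Rightarrow> ek" where
  "LDb n i = (if i = n then S else if 0 \<le> i \<and> i \<le> n - 1 then F else Z)"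

lemma b1_C: "0 \<le> n \<Longrightarrow> Hcx (- (n + 2)) = emk (LCb n)"
  unfolding Hcx_def mkcx_emk by (auto intro!: arg_cong[where f=emk] simp: LCb_def fun_eq_iff)

lemma Hcx_neg: "n < 0 \<Longrightarrow> Hcx n = mkcx (\<lambda>i. if i = - n then KH else if 0 \<le> i \<and> i \<le> - n - 1 then KF else KZ)"
  by (simp add: Hcx_def)
lemma Hcx_pos: "0 < n \<Longrightarrow> Hcx n = mkcx (\<lambda>i. if i = - n then KH else if - (n - 1) \<le> i \<and> i \<le> 0 then KF else KZ)"
  by (simp add: Hcx_def)
lemma Hcx_0: "Hcx 0 = mkcx (\<lambda>i. if i = 0 then KH else KZ)"
  by (simp add: Hcx_def)

lemma b1_D: assumes "0 \<le> n" shows "cx_op (Hcx n) = emk (LDb n)"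
proof (cases "n = 0")
  case True
  then show ?thesis unfolding True Hcx_0 op_emk by (auto intro!: arg_cong[where f=emk] simp: LDb_def fun_eq_iff)
next
  case False
  then have h: "0 < n" using assms by simp
  show ?thesis unfolding Hcx_pos[OF h] op_emk using h by (auto intro!: arg_cong[where f=emk] simp: LDb_def fun_eq_iff)
qed

lemma part_b1: "0 \<le> n \<Longrightarrow> cx_op (Hcx n) \<simeq>\<^sub>D Hcx (- (n + 2))"
  unfolding b1_C b1_D
  apply (rule D_iso_step)
    apply (rule is_complex_emk, auto simp: LCb_def ok3_def)[1]
   apply (rule is_complex_emk, auto simp: LDb_def ok3_def)[1]
  apply (rule qiso_emk[where fm = fm1])
  apply (auto simp: LCb_def LDb_def)
  done

section \<open>(b), n = -1\<close>

definition LCm :: "int \<Rightarrow> ek" where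
  "LCm i = (if i = 1 then H else if i = 0 then F else Z)"
definition LDm :: "int \<Rightarrow> ek" where
  "LDm i = (if i = -1 then S else if i = 0 then F else Z)"

lemma b2_C: "Hcx (- (-1 + 2)) = emk LCm"
  unfolding Hcx_def mkcx_emk by (auto intro!: arg_cong[where f=emk] simp: LCm_def fun_eq_iff)

lemma b2_D: "cx_op (Hcx (-1)) = emk LDm"
  unfolding Hcx_neg[of "-1", simplified] op_emk by (auto intro!: arg_cong[where f=emk] simp: LDm_def fun_eq_iff)

lemma part_b2: "cx_op (Hcx (-1)) \<simeq>\<^sub>D Hcx (- (-1 + 2))"
  unfolding b2_C b2_D
  apply (rule D_iso_step)
    apply (rule is_complex_emk, auto simp: LCm_def ok3_def)[1]
   apply (rule is_complex_emk, auto simp: LDm_def ok3_def)[1]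
  apply (rule qiso_emk[where fm = fm2])
  apply (auto simp: LCm_def LDm_def)
  done

section \<open>(b), n at most -2\<close>

definition LCn :: "int \<Rightarrow> int \<Rightarrow> ek" where
  "LCn n i = (if i = n + 2 then H else if n + 3 \<le> i \<and> i \<le> 0 then F else Z)"
definition LDn :: "int \<Rightarrow> int \<Rightarrow> ek" where
  "LDn n i = (if i = n then S else if n + 1 \<le> i \<and> i \<le> 0 then F else Z)"

lemma b3_C: "n \<le> -2 \<Longrightarrow> Hcx (- (n + 2)) = emk (LCn n)"
  unfolding Hcx_def mkcx_emk by (auto intro!: arg_cong[where f=emk] simp: LCn_def fun_eq_iff)

lemma b3_D: assumes "n \<le> -2" shows "cx_op (Hcx n) = emk (LDn n)"
proof -
  have h: "n < 0" using assms by simp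
  show ?thesis unfolding Hcx_neg[OF h] op_emk using assms by (auto intro!: arg_cong[where f=emk] simp: LDn_def fun_eq_iff)
qed

lemma part_b3: "n \<le> -2 \<Longrightarrow> cx_op (Hcx n) \<simeq>\<^sub>D Hcx (- (n + 2))"
  apply (simp only: b3_C b3_D)
  apply (rule D_iso_step)
    apply (rule is_complex_emk, auto simp: LCn_def ok3_def)[1]
   apply (rule is_complex_emk, auto simp: LDn_def ok3_def)[1]
  apply (rule qiso_emk[where fm = fm1])
  apply (auto simp: LCn_def LDn_def)
  done

section \<open>(c)\<close>

definition LCc :: "nat \<Rightarrow> int \<Rightarrow> ek" where
  "LCc r i = (if i = int r + 4 then H else if i = 2 then H else if 3 \<le> i \<and> i \<le> int r + 3 then F else Z)"
definition LDc :: "nat \<Rightarrow> int \<Rightarrow> ek" where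
  "LDc r i = (if i = 0 then S else if i = int r + 2 then S else if 1 \<le> i \<and> i \<le> int r + 1 then F else Z)"

lemma c_C: "\<Sigma> (int r + 4) (Bcx r) = emk (LCc r)"
  unfolding Bcx_def mkcx_emk susp_emk by (auto intro!: arg_cong[where f=emk] simp: LCc_def fun_eq_iff)

lemma c_D: "cx_op (Bcx r) = emk (LDc r)"
  unfolding Bcx_def op_emk by (auto intro!: arg_cong[where f=emk] simp: LDc_def fun_eq_iff)

lemma part_c: "cx_op (Bcx r) \<simeq>\<^sub>D \<Sigma> (int r + 4) (Bcx r)"
  unfolding c_C c_D
  apply (rule D_iso_step)
    apply (rule is_complex_emk, auto simp: LCc_def ok3_def)[1]
   apply (rule is_complex_emk, auto simp: LDc_def ok3_def)[1]
  apply (rule qiso_emk[where fm = fm1])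
  apply (auto simp: LCc_def LDc_def)
  done

theorem proposition4p13:
  shows "(\<forall>k::nat. cx_op (Acx k) \<simeq>\<^sub>D \<Sigma> (- int k) (Acx k)) \<and>
         (\<forall>n::int. cx_op (Hcx n) \<simeq>\<^sub>D Hcx (- (n + 2))) \<and>
         (\<forall>r::nat. cx_op (Bcx r) \<simeq>\<^sub>D \<Sigma> (int r + 4) (Bcx r))"
proof (intro conjI allI)
  fix k :: nat show "cx_op (Acx k) \<simeq>\<^sub>D \<Sigma> (- int k) (Acx k)" by (rule part_a)
next
  fix r :: nat show "cx_op (Bcx r) \<simeq>\<^sub>D \<Sigma> (int r + 4) (Bcx r)" by (rule part_c)
next
  fix n :: int
  consider "0 \<le> n" | "n = -1" | "n \<le> -2" by linarith
  then show "cx_op (Hcx n) \<simeq>\<^sub>D Hcx (- (n + 2))"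
  proof cases
    case 1 then show ?thesis by (rule part_b1)
  next
    case 2 then show ?thesis using part_b2 by simp
  next
    case 3 then show ?thesis by (rule part_b3)
  qed
qed

end
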